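(* Let $K$ be a field of any characteristic. Let $d_1,\ldots,d_n$ be positive integers and let $a_{i,j}$ ($1\le i\le r$, $1\le j\le n$) be positive integers, where $r\ge 3$. Let $A$ be the set of columns of the $n\times(n+r)$ matrix $$\begin{pmatrix} d_1 & 0 & \cdots & 0 & a_{1,1} & \cdots & a_{r,1}\\ 0 & d_2 & \cdots & 0 & a_{1,2} & \cdots & a_{r,2}\\ \vdots & & \ddots & & \vdots & & \vdots\\ 0 & 0 & \cdots & d_n & a_{1,n} & \cdots & a_{r,n}\end{pmatrix},$$ and let $I_A\subset K[x_1,\ldots,x_{n+r}]$ be the corresponding toric ideal (of height $r$). Then $I_A$ is radical splittable.
   Context: For a configuration $A=\{{\bf a}_1,\ldots,{\bf a}_N\}\subset\mathbb{Z}^n$ with $\ker_{\mathbb{Z}}(A)\cap\mathbb{N}^N=\{{\bf 0}\}$, the toric ideal $I_A$ is the kernel of $K[x_1,\ldots,x_N]\to K[t_1^{\pm1},\ldots,t_n^{\pm1}]$, $x_i\mapsto{\bf t}^{{\bf a}_i}$. (In the paper's terminology, $V(I_A)$ is a simplicial toric variety with full parametrization: all $a_{i,j}$ are nonnegative and nonzero.) $I_A$ is radical splittable if there exist toric ideals $I_{A_1},I_{A_2}\subset K[x_1,\ldots,x_{n+r}]$ with $I_A=\mathrm{rad}(I_{A_1}+I_{A_2})$ and $I_{A_i}\ne I_A$ for $i=1,2$. *)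

theory Defs
  imports Main "HOL-Library.Poly_Mapping"
begin

text \<open>Laurent polynomials in t_0, t_1, ...
  are the group algebra (nat =>0 int) =>0 'a.  A configuration of N vectors in Z^n is a
  map cfg :: nat => (nat =>0 int); only cfg 0, ..., cfg (N-1) are used.\<close>

type_synonym 'a mpoly = "(nat \<Rightarrow>\<^sub>0 nat) \<Rightarrow>\<^sub>0 'a"
type_synonym 'a lpoly = "(nat \<Rightarrow>\<^sub>0 int) \<Rightarrow>\<^sub>0 'a"

definition poly_ring :: "'a itself \<Rightarrow> nat \<Rightarrow> ('a::field) mpoly set" where
  "poly_ring _ N = {f. \<forall>u\<in>Poly_Mapping.keys f. Poly_Mapping.keys u \<subseteq> {..<N}}"

definition cfg_exp :: "(nat \<Rightarrow> (nat \<Rightarrow>\<^sub>0 int)) \<Rightarrow> (nat \<Rightarrow>\<^sub>0 nat) \<Rightarrow> (nat \<Rightarrow>\<^sub>0 int)" where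
  "cfg_exp A u = (\<Sum>i\<in>Poly_Mapping.keys u. Poly_Mapping.map (\<lambda>z. int (Poly_Mapping.lookup u i) * z) (A i))"

definition toric_map :: "(nat \<Rightarrow> (nat \<Rightarrow>\<^sub>0 int)) \<Rightarrow> ('a::field) mpoly \<Rightarrow> 'a lpoly" where
  "toric_map A f = (\<Sum>u\<in>Poly_Mapping.keys f. Poly_Mapping.single (cfg_exp A u) (Poly_Mapping.lookup f u))"

definition pointed_config :: "nat \<Rightarrow> (nat \<Rightarrow> (nat \<Rightarrow>\<^sub>0 int)) \<Rightarrow> bool" where
  "pointed_config N A \<longleftrightarrow> (\<forall>u. Poly_Mapping.keys u \<subseteq> {..<N} \<longrightarrow> cfg_exp A u = 0 \<longrightarrow> u = 0)"

definition toric_ideal :: "'a itself \<Rightarrow> nat \<Rightarrow> (nat \<Rightarrow> (nat \<Rightarrow>\<^sub>0 int)) \<Rightarrow> ('a::field) mpoly set" where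
  "toric_ideal T N A = {f \<in> poly_ring T N. toric_map A f = 0}"

definition ideal_sum :: "('a::field) mpoly set \<Rightarrow> 'a mpoly set \<Rightarrow> 'a mpoly set" where
  "ideal_sum I J = {f + g | f g. f \<in> I \<and> g \<in> J}"

definition rad :: "'a itself \<Rightarrow> nat \<Rightarrow> ('a::field) mpoly set \<Rightarrow> 'a mpoly set" where
  "rad T N I = {f \<in> poly_ring T N. \<exists>k. f ^ k \<in> I}"

definition radical_splittable :: "('a::field) itself \<Rightarrow> nat \<Rightarrow> (nat \<Rightarrow> (nat \<Rightarrow>\<^sub>0 int)) \<Rightarrow> bool" where
  "radical_splittable T N A \<longleftrightarrow>
     (\<exists>A1 A2. pointed_config N A1 \<and> pointed_config N A2 \<and>
        toric_ideal T N A = rad T N (ideal_sum (toric_ideal T N A1) (toric_ideal T N A2)) \<and>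
        toric_ideal T N A1 \<noteq> toric_ideal T N A \<and> toric_ideal T N A2 \<noteq> toric_ideal T N A)"

text \<open>Columns of the n x (n+r) matrix: column k < n is d_k e_k, column n+i (i < r)
  is (a_{i,0}, ..., a_{i,n-1}).  Indices are 0-based.\<close>
definition simplicial_config :: "nat \<Rightarrow> nat \<Rightarrow> (nat \<Rightarrow> nat) \<Rightarrow> (nat \<Rightarrow> nat \<Rightarrow> nat) \<Rightarrow> nat \<Rightarrow> (nat \<Rightarrow>\<^sub>0 int)" where
  "simplicial_config n r d a k =
     (if k < n then Poly_Mapping.single k (int (d k))
      else if k < n + r then (\<Sum>j<n. Poly_Mapping.single j (int (a (k - n) j)))
      else 0)"

end

theory Submission
  imports Defs
begin
abbreviation lk where "lk \<equiv> Poly_Mapping.lookup"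
abbreviation X :: "(nat \<Rightarrow>\<^sub>0 nat) \<Rightarrow> ('a::field) mpoly" where "X u \<equiv> Poly_Mapping.single u 1"

lemma toric_map_superset:
  assumes "finite S" "Poly_Mapping.keys f \<subseteq> S"
  shows "toric_map A f = (\<Sum>u\<in>S. Poly_Mapping.single (cfg_exp A u) (lk f u))"
  unfolding toric_map_def
  by (rule sum.mono_neutral_left) (use assms in \<open>auto simp: in_keys_iff\<close>)

lemma toric_map_add: "toric_map A (f + g) = toric_map A f + toric_map A g"
proof -
  let ?S = "Poly_Mapping.keys f \<union> Poly_Mapping.keys g"
  have k: "Poly_Mapping.keys (f + g) \<subseteq> ?S" by (rule keys_add)
  have "toric_map A (f + g) = (\<Sum>u\<in>?S. Poly_Mapping.single (cfg_exp A u) (lk (f+g) u))"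
    by (rule toric_map_superset) (use k in auto)
  also have "\<dots> = (\<Sum>u\<in>?S. Poly_Mapping.single (cfg_exp A u) (lk f u))
      + (\<Sum>u\<in>?S. Poly_Mapping.single (cfg_exp A u) (lk g u))"
    by (simp add: lookup_add single_add sum.distrib)
  also have "\<dots> = toric_map A f + toric_map A g"
    by (subst (1 2) toric_map_superset[of ?S]) auto
  finally show ?thesis .
qed

lemma toric_map_zero [simp]: "toric_map A 0 = 0"
  by (simp add: toric_map_def)

lemma toric_map_uminus: "toric_map A (- f) = - toric_map A f"
  using toric_map_add[of A f "-f"] by (metis add.commute eq_neg_iff_add_eq_0 add.right_inverse toric_map_zero)

lemma toric_map_diff: "toric_map A (f - g) = toric_map A f - toric_map A g"
  using toric_map_add[of A f "-g"] toric_map_uminus[of A g] by simp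

lemma toric_map_single: "toric_map A (Poly_Mapping.single u c) = Poly_Mapping.single (cfg_exp A u) c"
  by (subst toric_map_superset[of "{u}"]) auto

lemma toric_map_sum: "toric_map A (sum F S) = (\<Sum>x\<in>S. toric_map A (F x))"
  by (induction S rule: infinite_finite_induct) (auto simp: toric_map_add)

lemma pm_sum_singles: "f = (\<Sum>u\<in>Poly_Mapping.keys f. Poly_Mapping.single u (lk f u))"
proof (rule poly_mapping_eqI)
  fix k
  show "lk f k = lk (\<Sum>u\<in>Poly_Mapping.keys f. Poly_Mapping.single u (lk f u)) k"
    by (simp add: lookup_sum lookup_single when_def in_keys_iff) 
qed

lemma cfg_exp_lookup:
  assumes "finite S" "Poly_Mapping.keys u \<subseteq> S"
  shows "lk (cfg_exp A u) j = (\<Sum>i\<in>S. int (lk u i) * lk (A i) j)"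
proof -
  have "lk (cfg_exp A u) j = (\<Sum>i\<in>Poly_Mapping.keys u. int (lk u i) * lk (A i) j)"
    unfolding cfg_exp_def lookup_sum by (auto simp: map.rep_eq when_def intro!: sum.cong)
  also have "\<dots> = (\<Sum>i\<in>S. int (lk u i) * lk (A i) j)"
    by (rule sum.mono_neutral_left) (use assms in \<open>auto simp: in_keys_iff\<close>)
  finally show ?thesis .
qed

lemma cfg_exp_add: "cfg_exp A (u + v) = cfg_exp A u + cfg_exp A v"
proof (rule poly_mapping_eqI)
  fix j
  let ?S = "Poly_Mapping.keys u \<union> Poly_Mapping.keys v"
  have k: "Poly_Mapping.keys (u + v) \<subseteq> ?S" by (rule keys_add)
  show "lk (cfg_exp A (u + v)) j = lk (cfg_exp A u + cfg_exp A v) j"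
    using k cfg_exp_lookup[of ?S "u+v" A j] cfg_exp_lookup[of ?S u A j] cfg_exp_lookup[of ?S v A j]
    by (auto simp: lookup_add sum.distrib algebra_simps)
qed

lemma cfg_exp_zero [simp]: "cfg_exp A 0 = 0"
  by (simp add: cfg_exp_def)

lemma toric_map_mult: "toric_map A (f * g) = toric_map A f * toric_map A g"
proof -
  let ?F = "Poly_Mapping.keys f" and ?G = "Poly_Mapping.keys g"
  have "f * g = (\<Sum>u\<in>?F. Poly_Mapping.single u (lk f u)) * (\<Sum>v\<in>?G. Poly_Mapping.single v (lk g v))"
    by (subst (1) pm_sum_singles[of f], subst (1) pm_sum_singles[of g]) (rule refl)
  also have "\<dots> = (\<Sum>u\<in>?F. \<Sum>v\<in>?G. Poly_Mapping.single (u + v) (lk f u * lk g v))"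
    by (simp add: sum_product mult_single)
  finally have fg: "f * g = \<dots>" .
  have "toric_map A (f * g) = (\<Sum>u\<in>?F. \<Sum>v\<in>?G. Poly_Mapping.single (cfg_exp A u + cfg_exp A v) (lk f u * lk g v))"
    unfolding fg by (simp add: toric_map_sum toric_map_single cfg_exp_add)
  also have "\<dots> = (\<Sum>u\<in>?F. Poly_Mapping.single (cfg_exp A u) (lk f u)) * (\<Sum>v\<in>?G. Poly_Mapping.single (cfg_exp A v) (lk g v))"
    by (simp add: sum_product mult_single)
  also have "\<dots> = toric_map A f * toric_map A g"
    unfolding toric_map_def by simp
  finally show ?thesis .
qed

lemma toric_map_power: "toric_map A (f ^ k) = toric_map A f ^ k"
  by (induction k) (auto simp: toric_map_mult toric_map_single simp flip: single_one)

lemma toric_map_lookup: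
  "lk (toric_map A f) e = (\<Sum>u\<in>Poly_Mapping.keys f. (lk f u when cfg_exp A u = e))"
  unfolding toric_map_def lookup_sum by (simp add: lookup_single)

definition subr :: "'r::comm_ring_1 set \<Rightarrow> bool" where
  "subr S \<longleftrightarrow> 1 \<in> S \<and> (\<forall>a\<in>S. \<forall>b\<in>S. a + b \<in> S \<and> a * b \<in> S \<and> - a \<in> S)"

definition sideal :: "'r::comm_ring_1 set \<Rightarrow> 'r set \<Rightarrow> bool" where
  "sideal S I \<longleftrightarrow> 0 \<in> I \<and> I \<subseteq> S \<and> (\<forall>a\<in>I. \<forall>b\<in>I. a + b \<in> I) \<and> (\<forall>a\<in>I. \<forall>s\<in>S. s * a \<in> I)"

lemma subr_0: "subr S \<Longrightarrow> 0 \<in> S"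
  unfolding subr_def by (metis add.right_inverse)

lemma subr_pow: "subr S \<Longrightarrow> a \<in> S \<Longrightarrow> a ^ k \<in> S"
  by (induction k) (auto simp: subr_def)

lemma subr_of_nat: "subr S \<Longrightarrow> of_nat k \<in> S"
  by (induction k) (auto simp: subr_def subr_0)

lemma subr_diff: "subr S \<Longrightarrow> a \<in> S \<Longrightarrow> b \<in> S \<Longrightarrow> a - b \<in> S"
  unfolding subr_def by (metis diff_conv_add_uminus)

lemma sideal_mult: "sideal S I \<Longrightarrow> a \<in> I \<Longrightarrow> s \<in> S \<Longrightarrow> s * a \<in> I"
  unfolding sideal_def by blast
lemma sideal_mult': "sideal S I \<Longrightarrow> a \<in> I \<Longrightarrow> s \<in> S \<Longrightarrow> a * s \<in> I"
  unfolding sideal_def by (metis mult.commute)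
lemma sideal_add: "sideal S I \<Longrightarrow> a \<in> I \<Longrightarrow> b \<in> I \<Longrightarrow> a + b \<in> I"
  unfolding sideal_def by blast
lemma sideal_0: "sideal S I \<Longrightarrow> 0 \<in> I"
  unfolding sideal_def by blast
lemma sideal_sub: "sideal S I \<Longrightarrow> a \<in> I \<Longrightarrow> a \<in> S"
  unfolding sideal_def by blast
lemma sideal_uminus: "subr S \<Longrightarrow> sideal S I \<Longrightarrow> a \<in> I \<Longrightarrow> - a \<in> I"
proof -
  assume S: "subr S" and I: "sideal S I" and a: "a \<in> I"
  have "-1 \<in> S" using S unfolding subr_def by blast
  then show ?thesis using sideal_mult[OF I a, of "-1"] by simp
qed
lemma sideal_diff: "subr S \<Longrightarrow> sideal S I \<Longrightarrow> a \<in> I \<Longrightarrow> b \<in> I \<Longrightarrow> a - b \<in> I"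
  by (metis diff_conv_add_uminus sideal_add sideal_uminus)
lemma sideal_sum: "sideal S I \<Longrightarrow> (\<And>x. x \<in> A \<Longrightarrow> F x \<in> I) \<Longrightarrow> sum F A \<in> I"
  by (induction A rule: infinite_finite_induct) (auto intro: sideal_0 sideal_add)

lemma rad_add:
  assumes S: "subr S" and I: "sideal S I" and a: "a \<in> S" and b: "b \<in> S"
    and ai: "a ^ i \<in> I" and bj: "b ^ j \<in> I"
  shows "(a + b) ^ (i + j) \<in> I"
proof -
  have "(a + b) ^ (i + j) = (\<Sum>k\<le>i+j. of_nat ((i+j) choose k) * a ^ k * b ^ (i + j - k))"
    by (rule binomial_ring)
  also have "\<dots> \<in> I"
  proof (rule sideal_sum[OF I])
    fix k assume "k \<in> {..i+j}"
    show "of_nat ((i+j) choose k) * a ^ k * b ^ (i + j - k) \<in> I"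
    proof (cases "i \<le> k")
      case True
      then have "a ^ k = a ^ i * a ^ (k - i)" by (simp flip: power_add)
      then have "a ^ k \<in> I" using sideal_mult'[OF I ai subr_pow[OF S a]] by simp
      then show ?thesis using S I a b
        by (simp add: mult.assoc sideal_mult sideal_mult' subr_of_nat subr_pow)
    next
      case False
      have e: "i + j - k = j + (i + j - k - j)" using False by simp
      have "b ^ (i + j - k) = b ^ j * b ^ (i + j - k - j)" by (subst e) (simp only: power_add)
      then have "b ^ (i + j - k) \<in> I" using sideal_mult'[OF I bj subr_pow[OF S b]] by simp
      then show ?thesis using S I a b
        by (metis sideal_mult subr_def subr_of_nat subr_pow)
    qed
  qed
  finally show ?thesis .
qed

lemma subr_sum: "subr S \<Longrightarrow> (\<And>x. x \<in> A \<Longrightarrow> F x \<in> S) \<Longrightarrow> sum F A \<in> S"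
proof (induction A rule: infinite_finite_induct)
  case (infinite A) then show ?case by (simp add: subr_0)
next
  case empty then show ?case by (simp add: subr_0)
next
  case (insert x F) then show ?case by (simp add: subr_def)
qed

lemma rad_final:
  assumes S: "subr S" and I: "sideal S I" and m: "m \<in> S" and g: "g \<in> S" and h: "h \<in> S"
    and gk: "g ^ k - m * h \<in> I" and ms: "m ^ s * g \<in> I"
  shows "g ^ (k * s + 1) \<in> I"
proof -
  have "(g ^ k) ^ s - (m * h) ^ s = (g ^ k - m * h) * (\<Sum>i<s. (m * h) ^ (s - Suc i) * (g ^ k) ^ i)"
    by (rule power_diff_sumr2)
  moreover have "(\<Sum>i<s. (m * h) ^ (s - Suc i) * (g ^ k) ^ i) \<in> S"
  proof (rule subr_sum[OF S])
    fix i
    have "m * h \<in> S" using S m h unfolding subr_def by blast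
    then have "(m * h) ^ (s - Suc i) \<in> S" "(g ^ k) ^ i \<in> S" using subr_pow[OF S] g by auto
    then show "(m * h) ^ (s - Suc i) * (g ^ k) ^ i \<in> S" using S unfolding subr_def by blast
  qed
  ultimately have "(g ^ k) ^ s - (m * h) ^ s \<in> I"
    using sideal_mult'[OF I gk] by simp
  then have 1: "g * ((g ^ k) ^ s - (m * h) ^ s) \<in> I" using sideal_mult[OF I _ g] by blast
  have 2: "g * (m * h) ^ s \<in> I"
    using sideal_mult[OF I ms subr_pow[OF S h, of s]] by (simp add: power_mult_distrib ac_simps)
  have "g ^ (k * s + 1) = g * (g ^ k) ^ s"
    by (simp add: power_mult)
  also have "\<dots> = g * ((g ^ k) ^ s - (m * h) ^ s) + g * (m * h) ^ s"
    by (simp add: right_diff_distrib)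
  finally have "g ^ (k * s + 1) = g * ((g ^ k) ^ s - (m * h) ^ s) + g * (m * h) ^ s" .
  then show ?thesis using sideal_add[OF I 1 2] by simp
qed

definition radset :: "'r::comm_ring_1 set \<Rightarrow> 'r set \<Rightarrow> 'r set" where
  "radset S I = {f \<in> S. \<exists>k. f ^ k \<in> I}"

lemma rad_sideal:
  assumes S: "subr S" and I: "sideal S I"
  shows "sideal S (radset S I)"
  unfolding sideal_def radset_def
proof (intro conjI ballI)
  show "0 \<in> {f \<in> S. \<exists>k. f ^ k \<in> I}" using sideal_0[OF I] subr_0[OF S]
    by (intro CollectI conjI exI[of _ 1]) auto
  show "{f \<in> S. \<exists>k. f ^ k \<in> I} \<subseteq> S" by auto
next
  fix a b assume "a \<in> {f \<in> S. \<exists>k. f ^ k \<in> I}" "b \<in> {f \<in> S. \<exists>k. f ^ k \<in> I}"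
  then obtain i j where a: "a \<in> S" "a ^ i \<in> I" and b: "b \<in> S" "b ^ j \<in> I" by blast
  have "a + b \<in> S" using S a b unfolding subr_def by blast
  then show "a + b \<in> {f \<in> S. \<exists>k. f ^ k \<in> I}"
    using rad_add[OF S I a(1) b(1) a(2) b(2)] by blast
next
  fix a s assume "a \<in> {f \<in> S. \<exists>k. f ^ k \<in> I}" "s \<in> S"
  then obtain i where a: "a \<in> S" "a ^ i \<in> I" and s: "s \<in> S" by blast
  have "s * a \<in> S" using S a s unfolding subr_def by blast
  moreover have "(s * a) ^ i \<in> I"
    unfolding power_mult_distrib by (rule sideal_mult[OF I a(2) subr_pow[OF S s]])
  ultimately show "s * a \<in> {f \<in> S. \<exists>k. f ^ k \<in> I}" by blast
qed

definition VV :: "nat \<Rightarrow> (nat \<Rightarrow>\<^sub>0 nat) set" where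
  "VV N = {u. Poly_Mapping.keys u \<subseteq> {..<N}}"

lemma VV_add: "u \<in> VV N \<Longrightarrow> v \<in> VV N \<Longrightarrow> u + v \<in> VV N"
  unfolding VV_def using keys_add[of u v] by auto

lemma X_in_poly_ring: "u \<in> VV N \<Longrightarrow> (X u :: 'a::field mpoly) \<in> poly_ring T N"
  unfolding VV_def poly_ring_def by auto

lemma subr_poly_ring: "subr (poly_ring T N :: 'a::field mpoly set)"
  unfolding subr_def poly_ring_def
proof (intro conjI ballI)
  show "(1::'a mpoly) \<in> {f. \<forall>u\<in>Poly_Mapping.keys f. Poly_Mapping.keys u \<subseteq> {..<N}}"
    by (simp flip: single_one)
next
  fix a b :: "'a mpoly"
  assume a: "a \<in> {f. \<forall>u\<in>Poly_Mapping.keys f. Poly_Mapping.keys u \<subseteq> {..<N}}"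
    and b: "b \<in> {f. \<forall>u\<in>Poly_Mapping.keys f. Poly_Mapping.keys u \<subseteq> {..<N}}"
  show "a + b \<in> {f. \<forall>u\<in>Poly_Mapping.keys f. Poly_Mapping.keys u \<subseteq> {..<N}}"
    using a b keys_add[of a b] by blast
  show "- a \<in> {f. \<forall>u\<in>Poly_Mapping.keys f. Poly_Mapping.keys u \<subseteq> {..<N}}"
    using a by simp
  show "a * b \<in> {f. \<forall>u\<in>Poly_Mapping.keys f. Poly_Mapping.keys u \<subseteq> {..<N}}"
  proof (intro CollectI ballI)
    fix w assume "w \<in> Poly_Mapping.keys (a * b)"
    then obtain x y where "w = x + y" "x \<in> Poly_Mapping.keys a" "y \<in> Poly_Mapping.keys b"
      using keys_mult[of a b] by blast
    moreover have "Poly_Mapping.keys x \<subseteq> {..<N}" "Poly_Mapping.keys y \<subseteq> {..<N}"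
      using a b \<open>x \<in> _\<close> \<open>y \<in> _\<close> by auto
    ultimately show "Poly_Mapping.keys w \<subseteq> {..<N}" using keys_add[of x y] by blast
  qed
qed

lemma sideal_toric: "sideal (poly_ring T N) (toric_ideal T N A :: 'a::field mpoly set)"
  unfolding sideal_def toric_ideal_def
  using subr_poly_ring[of T N] unfolding subr_def
  by (auto simp: toric_map_add toric_map_mult subr_0[OF subr_poly_ring])

lemma toric_radical:
  assumes "f \<in> poly_ring T N" "f ^ k \<in> toric_ideal T N A"
  shows "(f :: 'a::field mpoly) \<in> toric_ideal T N A"
proof -
  have "toric_map A f ^ k = 0" using assms by (simp add: toric_ideal_def toric_map_power)
  moreover have "k \<noteq> 0"
  proof
    assume "k = 0"
    then have "toric_map A (1::'a mpoly) = 0" using assms by (simp add: toric_ideal_def)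
    then have "(1::'a lpoly) = 0" by (simp add: toric_map_single flip: single_one)
    then show False by simp
  qed
  ultimately have "toric_map A f = 0" by simp
  then show ?thesis using assms by (simp add: toric_ideal_def)
qed

lemma binom_poly: "u \<in> VV N \<Longrightarrow> v \<in> VV N \<Longrightarrow> (X u - X v :: 'a::field mpoly) \<in> poly_ring T N"
  using subr_diff[OF subr_poly_ring] X_in_poly_ring by blast

lemma binom_in:
  assumes "u \<in> VV N" "v \<in> VV N" "cfg_exp A u = cfg_exp A v"
  shows "(X u - X v :: 'a::field mpoly) \<in> toric_ideal T N A"
  using assms binom_poly[OF assms(1,2)] unfolding toric_ideal_def
  by (simp add: toric_map_diff toric_map_single)

lemma binom_notin:
  assumes "cfg_exp A u \<noteq> cfg_exp A v"
  shows "(X u - X v :: 'a::field mpoly) \<notin> toric_ideal T N A"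
proof
  assume "(X u - X v :: 'a::field mpoly) \<in> toric_ideal T N A"
  then have "toric_map A (X u - X v :: 'a mpoly) = 0" by (simp add: toric_ideal_def)
  then have "lk (Poly_Mapping.single (cfg_exp A u) (1::'a) - Poly_Mapping.single (cfg_exp A v) 1) (cfg_exp A u) = 0"
    by (simp add: toric_map_diff toric_map_single)
  then show False using assms by (simp add: lookup_minus lookup_single)
qed

lemma toric_span:
  assumes R: "sideal (poly_ring T N) R"
    and hyp: "\<And>u v. u \<in> VV N \<Longrightarrow> v \<in> VV N \<Longrightarrow> cfg_exp A u = cfg_exp A v \<Longrightarrow> (X u - X v :: 'a::field mpoly) \<in> R"
    and f: "f \<in> toric_ideal T N A"
  shows "f \<in> R"
  using f
proof (induction "card (Poly_Mapping.keys f)" arbitrary: f rule: less_induct)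
  case less
  note S = subr_poly_ring[of T N]
  note I = sideal_toric[of T N A]
  show ?case
  proof (cases "f = 0")
    case True then show ?thesis using sideal_0[OF R] by simp
  next
    case False
    then obtain u where u: "u \<in> Poly_Mapping.keys f" by (metis ex_in_conv keys_eq_empty)
    have fS: "f \<in> poly_ring T N" using less.prems by (simp add: toric_ideal_def)
    then have uV: "u \<in> VV N" using u by (simp add: poly_ring_def VV_def)
    have "\<exists>u'\<in>Poly_Mapping.keys f. u' \<noteq> u \<and> cfg_exp A u' = cfg_exp A u"
    proof (rule ccontr)
      assume "\<not> ?thesis"
      then have "(\<Sum>u'\<in>Poly_Mapping.keys f. (lk f u' when cfg_exp A u' = cfg_exp A u))
          = (\<Sum>u'\<in>Poly_Mapping.keys f. (if u' = u then lk f u else 0))"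
        by (intro sum.cong) (auto simp: when_def)
      also have "\<dots> = lk f u" using u by simp
      finally have "lk (toric_map A f) (cfg_exp A u) = lk f u" by (simp add: toric_map_lookup)
      moreover have "toric_map A f = 0" using less.prems by (simp add: toric_ideal_def)
      ultimately show False using u by (simp add: in_keys_iff)
    qed
    then obtain u' where u': "u' \<in> Poly_Mapping.keys f" "u' \<noteq> u" "cfg_exp A u' = cfg_exp A u" by blast
    have u'V: "u' \<in> VV N" using u' fS by (simp add: poly_ring_def VV_def)
    define c where "c = lk f u"
    define b where "b = Poly_Mapping.single 0 c * (X u - X u' :: 'a mpoly)"
    have cS: "Poly_Mapping.single 0 c \<in> poly_ring T N" by (simp add: poly_ring_def)
    have bI: "b \<in> toric_ideal T N A" unfolding b_def
      by (rule sideal_mult[OF I binom_in[OF uV u'V u'(3)[symmetric]] cS])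
    have bR: "b \<in> R" unfolding b_def
      by (rule sideal_mult[OF R hyp[OF uV u'V u'(3)[symmetric]] cS])
    define f' where "f' = f - b"
    have f'I: "f' \<in> toric_ideal T N A" unfolding f'_def by (rule sideal_diff[OF S I less.prems bI])
    have bexp: "b = Poly_Mapping.single u c - Poly_Mapping.single u' c"
      unfolding b_def by (simp add: right_diff_distrib mult_single)
    have "Poly_Mapping.keys f' \<subseteq> Poly_Mapping.keys f - {u}"
    proof
      fix k assume k: "k \<in> Poly_Mapping.keys f'"
      have lkf': "lk f' k = lk f k - (c when u = k) + (c when u' = k)"
        unfolding f'_def bexp by (simp add: lookup_minus lookup_single)
      show "k \<in> Poly_Mapping.keys f - {u}"
        using k u' unfolding lkf' in_keys_iff by (auto simp: when_def c_def in_keys_iff split: if_splits)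
    qed
    then have "card (Poly_Mapping.keys f') \<le> card (Poly_Mapping.keys f - {u})"
      by (intro card_mono) auto
    also have "\<dots> < card (Poly_Mapping.keys f)"
      using u by (intro card_Diff1_less) auto
    finally have "card (Poly_Mapping.keys f') < card (Poly_Mapping.keys f)" .
    then have "f' \<in> R" using less.hyps f'I by blast
    then have "f' + b \<in> R" using sideal_add[OF R _ bR] by blast
    then show ?thesis by (simp add: f'_def)
  qed
qed

lemma sum_lessThan_add_split:
  "(\<Sum>i<m + k. f i) = (\<Sum>i<m. f i) + (\<Sum>i<k. f (m + i))" for f :: "nat \<Rightarrow> 'b::comm_monoid_add"
  by (induction k) (auto simp: add_ac)

locale SC =
  fixes n r :: nat and d :: "nat \<Rightarrow> nat" and a :: "nat \<Rightarrow> nat \<Rightarrow> nat"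
  assumes n1: "n \<ge> 1" and r3: "r \<ge> 3" and dpos: "\<forall>j<n. d j > 0"
    and apos: "\<forall>i<r. \<forall>j<n. a i j > 0"
begin

abbreviation "AA \<equiv> simplicial_config n r d a"

definition Phi :: "(nat \<Rightarrow>\<^sub>0 nat) \<Rightarrow> nat \<Rightarrow> int" where
  "Phi u j = int (d j) * int (lk u j) + (\<Sum>i<r. int (a i j) * int (lk u (n + i)))"

lemma AA_lk: "lk (AA k) j = (if k < n then (int (d k) when k = j)
   else if k < n + r then (if j < n then int (a (k - n) j) else 0) else 0)"
  unfolding simplicial_config_def
  by (auto simp: lookup_single lookup_sum when_def)

lemma AA_lookup:
  assumes "u \<in> VV (n + r)"
  shows "lk (cfg_exp AA u) j = (if j < n then Phi u j else 0)"
proof -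
  have "lk (cfg_exp AA u) j = (\<Sum>i<n + r. int (lk u i) * lk (AA i) j)"
    by (rule cfg_exp_lookup) (use assms in \<open>auto simp: VV_def\<close>)
  also have "\<dots> = (\<Sum>i<n. int (lk u i) * lk (AA i) j) + (\<Sum>i<r. int (lk u (n + i)) * lk (AA (n + i)) j)"
    by (rule sum_lessThan_add_split)
  also have "(\<Sum>i<n. int (lk u i) * lk (AA i) j) = (if j < n then int (d j) * int (lk u j) else 0)"
    by (simp add: AA_lk when_def if_distrib[of "\<lambda>x. _ * x"] sum.If_cases cong: if_cong)
  also have "(\<Sum>i<r. int (lk u (n + i)) * lk (AA (n + i)) j) = (if j < n then (\<Sum>i<r. int (a i j) * int (lk u (n + i))) else 0)"
    by (auto simp: AA_lk mult.commute intro!: sum.cong)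
  finally show ?thesis by (simp add: Phi_def)
qed

lemma AA_eq:
  assumes "u \<in> VV (n + r)" "v \<in> VV (n + r)"
  shows "cfg_exp AA u = cfg_exp AA v \<longleftrightarrow> (\<forall>j<n. Phi u j = Phi v j)"
proof
  assume "cfg_exp AA u = cfg_exp AA v"
  then show "\<forall>j<n. Phi u j = Phi v j" using AA_lookup[OF assms(1)] AA_lookup[OF assms(2)]
    by metis
next
  assume "\<forall>j<n. Phi u j = Phi v j"
  then show "cfg_exp AA u = cfg_exp AA v"
    by (intro poly_mapping_eqI) (simp add: AA_lookup[OF assms(1)] AA_lookup[OF assms(2)])
qed

definition tw :: "(nat \<Rightarrow> int) \<Rightarrow> nat \<Rightarrow> (nat \<Rightarrow>\<^sub>0 int)" where
  "tw l k = AA k + Poly_Mapping.single n (l k)"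

definition Lam :: "(nat \<Rightarrow> int) \<Rightarrow> (nat \<Rightarrow>\<^sub>0 nat) \<Rightarrow> int" where
  "Lam l u = (\<Sum>i<n + r. int (lk u i) * l i)"

lemma tw_lookup:
  assumes "u \<in> VV (n + r)"
  shows "lk (cfg_exp (tw l) u) j = (if j < n then Phi u j else 0) + (if j = n then Lam l u else 0)"
proof -
  have "lk (cfg_exp (tw l) u) j = (\<Sum>i<n + r. int (lk u i) * lk (tw l i) j)"
    by (rule cfg_exp_lookup) (use assms in \<open>auto simp: VV_def\<close>)
  also have "\<dots> = (\<Sum>i<n + r. int (lk u i) * lk (AA i) j) + (\<Sum>i<n + r. int (lk u i) * (l i when n = j))"
    by (simp add: tw_def lookup_add lookup_single distrib_left sum.distrib)
  also have "(\<Sum>i<n + r. int (lk u i) * lk (AA i) j) = lk (cfg_exp AA u) j"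
    by (rule cfg_exp_lookup[symmetric]) (use assms in \<open>auto simp: VV_def\<close>)
  also have "(\<Sum>i<n + r. int (lk u i) * (l i when n = j)) = (if j = n then Lam l u else 0)"
    by (auto simp: Lam_def when_def)
  finally show ?thesis using AA_lookup[OF assms] by simp
qed

lemma tw_eq:
  assumes "u \<in> VV (n + r)" "v \<in> VV (n + r)"
  shows "cfg_exp (tw l) u = cfg_exp (tw l) v \<longleftrightarrow> (\<forall>j<n. Phi u j = Phi v j) \<and> Lam l u = Lam l v"
proof
  assume h: "cfg_exp (tw l) u = cfg_exp (tw l) v"
  have "\<forall>j<n. Phi u j = Phi v j"
  proof (intro allI impI)
    fix j assume "j < n"
    then show "Phi u j = Phi v j" using h tw_lookup[OF assms(1), of l j] tw_lookup[OF assms(2), of l j] by simp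
  qed
  moreover have "Lam l u = Lam l v"
    using h tw_lookup[OF assms(1), of l n] tw_lookup[OF assms(2), of l n] by simp
  ultimately show "(\<forall>j<n. Phi u j = Phi v j) \<and> Lam l u = Lam l v" by blast
next
  assume "(\<forall>j<n. Phi u j = Phi v j) \<and> Lam l u = Lam l v"
  then show "cfg_exp (tw l) u = cfg_exp (tw l) v"
    by (intro poly_mapping_eqI) (simp add: tw_lookup[OF assms(1)] tw_lookup[OF assms(2)])
qed

lemma Phi_nonneg_terms:
  assumes "j < n" "Phi u j = 0"
  shows "lk u j = 0" "\<And>i. i < r \<Longrightarrow> lk u (n + i) = 0"
proof -
  have t: "\<forall>i\<in>{..<r}. 0 \<le> int (a i j) * int (lk u (n + i))" by simp
  have dj: "d j > 0" using dpos assms by auto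
  have "int (d j) * int (lk u j) = 0 \<and> (\<Sum>i<r. int (a i j) * int (lk u (n + i))) = 0"
    using assms(2) unfolding Phi_def
    by (smt (verit) sum_nonneg t zero_le_mult_iff of_nat_0_le_iff)
  then have 1: "int (d j) * int (lk u j) = 0" and 2: "\<forall>i\<in>{..<r}. int (a i j) * int (lk u (n + i)) = 0"
    using sum_nonneg_eq_0_iff[of "{..<r}" "\<lambda>i. int (a i j) * int (lk u (n + i))"] by auto
  show "lk u j = 0" using 1 dj by simp
  fix i assume "i < r"
  then have "int (a i j) * int (lk u (n + i)) = 0" "a i j > 0" using 2 apos assms(1) by auto
  then show "lk u (n + i) = 0" by simp
qed

lemma VV_eqI:
  assumes "u \<in> VV N" "v \<in> VV N" "\<And>k. k < N \<Longrightarrow> lk u k = lk v k"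
  shows "u = v"
proof (rule poly_mapping_eqI)
  fix k show "lk u k = lk v k"
  proof (cases "k < N")
    case False
    then have "k \<notin> Poly_Mapping.keys u" "k \<notin> Poly_Mapping.keys v" using assms(1,2) by (auto simp: VV_def)
    then show ?thesis by (simp add: in_keys_iff)
  qed (use assms in auto)
qed

lemma tw_pointed: "pointed_config (n + r) (tw l)"
  unfolding pointed_config_def
proof (intro allI impI)
  fix u assume uV: "Poly_Mapping.keys u \<subseteq> {..<n + r}" and z: "cfg_exp (tw l) u = 0"
  have uV': "u \<in> VV (n + r)" using uV by (simp add: VV_def)
  have P: "Phi u j = 0" if "j < n" for j
    using tw_lookup[OF uV', of l j] z that by simp
  show "u = 0"
  proof (rule VV_eqI[OF uV'])
    show "0 \<in> VV (n + r)" by (simp add: VV_def)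
    fix k assume k: "k < n + r"
    show "lk u k = lk 0 k"
    proof (cases "k < n")
      case True then show ?thesis using Phi_nonneg_terms(1)[OF True P[OF True]] by simp
    next
      case False
      then have "k = n + (k - n)" "k - n < r" using k by auto
      moreover have "0 < n" using n1 by simp
      ultimately show ?thesis using Phi_nonneg_terms(2)[of 0 u "k - n"] P[of 0] by simp
    qed
  qed
qed

lemma tw_sub:
  "toric_ideal T (n + r) (tw l) \<subseteq> (toric_ideal T (n + r) AA :: 'a::field mpoly set)"
proof
  fix f :: "'a mpoly" assume f: "f \<in> toric_ideal T (n + r) (tw l)"
  show "f \<in> toric_ideal T (n + r) AA"
  proof (rule toric_span[OF sideal_toric _ f])
    fix u v assume u: "u \<in> VV (n + r)" and v: "v \<in> VV (n + r)" and e: "cfg_exp (tw l) u = cfg_exp (tw l) v"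
    have "cfg_exp AA u = cfg_exp AA v" using e tw_eq[OF u v] AA_eq[OF u v] by blast
    then show "(X u - X v :: 'a mpoly) \<in> toric_ideal T (n + r) AA" by (rule binom_in[OF u v])
  qed
qed

end

lemma Xshift: "(X c :: 'a::field mpoly) * (X p - X q) = X (c + p) - X (c + q)"
  by (simp add: right_diff_distrib mult_single)

context SC begin

definition DD :: nat where "DD = (\<Prod>j<n. d j)"
definition cvec :: "nat \<Rightarrow> (nat \<Rightarrow>\<^sub>0 nat)" where
  "cvec i = (\<Sum>j<n. Poly_Mapping.single j (DD * a i j div d j))"
definition Ms :: "nat \<Rightarrow> (nat \<Rightarrow>\<^sub>0 nat)" where
  "Ms s = (\<Sum>j<n. Poly_Mapping.single j s)"

lemma DD_pos: "DD > 0"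
  unfolding DD_def using dpos by (simp add: prod_pos)

lemma d_dvd_DD: "j < n \<Longrightarrow> d j dvd DD"
  unfolding DD_def by (rule dvd_prodI) auto

lemma lk_Ms: "lk (Ms s) j = (if j < n then s else 0)"
  unfolding Ms_def by (auto simp: lookup_sum lookup_single when_def)

lemma lk_cvec: "lk (cvec i) j = (if j < n then DD * a i j div d j else 0)"
  unfolding cvec_def by (auto simp: lookup_sum lookup_single when_def)

lemma VV_I: "(\<And>k. k \<ge> N \<Longrightarrow> lk u k = 0) \<Longrightarrow> u \<in> VV N"
proof -
  assume h: "\<And>k. k \<ge> N \<Longrightarrow> lk u k = 0"
  show "u \<in> VV N" unfolding VV_def
  proof (intro CollectI subsetI)
    fix x assume "x \<in> Poly_Mapping.keys u"
    then have "lk u x \<noteq> 0" by (simp add: in_keys_iff)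
    then show "x \<in> {..<N}" using h not_less by auto
  qed
qed

lemma VV_D: "u \<in> VV N \<Longrightarrow> k \<ge> N \<Longrightarrow> lk u k = 0"
  unfolding VV_def by (auto simp: in_keys_iff)

lemma Ms_VV: "Ms s \<in> VV (n + r)"
  by (rule VV_I) (simp add: lk_Ms)

lemma cvec_VV: "cvec i \<in> VV (n + r)"
  by (rule VV_I) (simp add: lk_cvec)

lemma single_VV: "k < N \<Longrightarrow> Poly_Mapping.single k b \<in> VV N"
  by (rule VV_I) (simp add: lookup_single when_def)

lemma Ms_add: "Ms (s + t) = Ms s + Ms t"
  by (rule poly_mapping_eqI) (simp add: lk_Ms lookup_add)

lemma Ms_0 [simp]: "Ms 0 = 0"
  by (rule poly_mapping_eqI) (simp add: lk_Ms)

lemma cvec_ge: "i < r \<Longrightarrow> j < n \<Longrightarrow> DD * a i j div d j \<ge> 1"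
proof -
  assume i: "i < r" and j: "j < n"
  have "d j \<le> DD" using d_dvd_DD[OF j] DD_pos by (simp add: dvd_imp_le)
  also have "\<dots> \<le> DD * a i j"
  proof -
    have "1 \<le> a i j" using apos i j by (simp add: Suc_le_eq)
    then show ?thesis using mult_le_mono2[of 1 "a i j" DD] by simp
  qed
  finally have "d j \<le> DD * a i j" .
  moreover have "0 < d j" using dpos j by simp
  ultimately have "0 < DD * a i j div d j" by (simp add: div_greater_zero_iff)
  then show ?thesis by simp
qed

lemma Phi_single: "j < n \<Longrightarrow> i < r \<Longrightarrow> Phi (Poly_Mapping.single (n + i) DD) j = int (a i j) * int DD"
proof -
  assume j: "j < n" and i: "i < r"
  have "(\<Sum>ia<r. int (a ia j) * int (lk (Poly_Mapping.single (n + i) DD) (n + ia)))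
      = (\<Sum>ia<r. if ia = i then int (a i j) * int DD else 0)"
    by (rule sum.cong) (auto simp: lookup_single when_def)
  also have "\<dots> = int (a i j) * int DD" using i by simp
  finally show ?thesis unfolding Phi_def using j by (simp add: lookup_single when_def)
qed

lemma Phi_cvec: "j < n \<Longrightarrow> Phi (cvec i) j = int (a i j) * int DD"
proof -
  assume j: "j < n"
  have "int (d j) * int (DD * a i j div d j) = int (DD * a i j)"
    using d_dvd_DD[OF j] by (metis dvd_mult2 dvd_mult_div_cancel of_nat_mult)
  then show ?thesis unfolding Phi_def using j by (simp add: lk_cvec)
qed

lemma gen_pair: "i < r \<Longrightarrow> \<forall>j<n. Phi (Poly_Mapping.single (n + i) DD) j = Phi (cvec i) j"
  by (simp add: Phi_single Phi_cvec)

lemma Phi_add: "Phi (u + v) j = Phi u j + Phi v j"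
  unfolding Phi_def by (simp add: lookup_add algebra_simps sum.distrib)

end

locale SCJ = SC +
  fixes J :: "'a::field mpoly set"
  assumes J: "sideal (poly_ring TYPE('a) (n + r)) J"
    and Jgen: "\<And>i. i < r \<Longrightarrow> X (Poly_Mapping.single (n + i) DD) - X (cvec i) \<in> J"
begin

abbreviation "SS \<equiv> poly_ring TYPE('a) (n + r)"
abbreviation "WW \<equiv> VV (n + r)"

definition E :: "(nat \<Rightarrow>\<^sub>0 nat) \<Rightarrow> (nat \<Rightarrow>\<^sub>0 nat) \<Rightarrow> bool" where
  "E u v \<longleftrightarrow> u \<in> WW \<and> v \<in> WW \<and> (\<exists>s. X (Ms s + u) - X (Ms s + v) \<in> J)"

lemma E_gen: "u \<in> WW \<Longrightarrow> v \<in> WW \<Longrightarrow> X u - X v \<in> J \<Longrightarrow> E u v"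
  unfolding E_def by (intro conjI exI[of _ 0]) auto

lemma E_refl: "u \<in> WW \<Longrightarrow> E u u"
  using E_gen sideal_0[OF J] by simp

lemma E_sym: "E u v \<Longrightarrow> E v u"
proof -
  assume "E u v"
  then obtain s where u: "u \<in> WW" "v \<in> WW" and h: "X (Ms s + u) - X (Ms s + v) \<in> J" unfolding E_def by blast
  have "- (X (Ms s + u) - X (Ms s + v)) \<in> J" by (rule sideal_uminus[OF subr_poly_ring J h])
  then have "X (Ms s + v) - X (Ms s + u) \<in> J" by simp
  then show "E v u" unfolding E_def using u by blast
qed

lemma E_mult: "c \<in> WW \<Longrightarrow> X p - X q \<in> J \<Longrightarrow> X (c + p) - X (c + q) \<in> J"
proof -
  assume c: "c \<in> WW" and h: "X p - X q \<in> J"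
  have "X c * (X p - X q) \<in> J" by (rule sideal_mult[OF J h X_in_poly_ring[OF c]])
  then show ?thesis by (simp only: Xshift)
qed

lemma E_trans: "E u v \<Longrightarrow> E v w \<Longrightarrow> E u w"
proof -
  assume "E u v" "E v w"
  then obtain s t where uv: "u \<in> WW" "v \<in> WW" "X (Ms s + u) - X (Ms s + v) \<in> J"
    and vw: "w \<in> WW" "X (Ms t + v) - X (Ms t + w) \<in> J" unfolding E_def by blast
  have 1: "X (Ms t + (Ms s + u)) - X (Ms t + (Ms s + v)) \<in> J" by (rule E_mult[OF Ms_VV uv(3)])
  have 2: "X (Ms s + (Ms t + v)) - X (Ms s + (Ms t + w)) \<in> J" by (rule E_mult[OF Ms_VV vw(2)])
  have "X (Ms (s + t) + u) - X (Ms (s + t) + w) \<in> J"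
    using sideal_add[OF J 1 2] by (simp add: Ms_add add_ac)
  then show "E u w" unfolding E_def using uv vw by blast
qed

lemma E_add: "E u v \<Longrightarrow> w \<in> WW \<Longrightarrow> E (u + w) (v + w)"
proof -
  assume "E u v" "w \<in> WW"
  then obtain s where uv: "u \<in> WW" "v \<in> WW" "X (Ms s + u) - X (Ms s + v) \<in> J" unfolding E_def by blast
  have "X (w + (Ms s + u)) - X (w + (Ms s + v)) \<in> J" by (rule E_mult[OF \<open>w \<in> WW\<close> uv(3)])
  moreover have "w + (Ms s + u) = Ms s + (u + w)" "w + (Ms s + v) = Ms s + (v + w)" by (simp_all add: add_ac)
  ultimately have "X (Ms s + (u + w)) - X (Ms s + (v + w)) \<in> J" by simp
  then show ?thesis unfolding E_def using uv \<open>w \<in> WW\<close> VV_add by blast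
qed

lemma E_unshift: "u \<in> WW \<Longrightarrow> v \<in> WW \<Longrightarrow> E (u + Ms k) (v + Ms k) \<Longrightarrow> E u v"
proof -
  assume u: "u \<in> WW" and v: "v \<in> WW" and "E (u + Ms k) (v + Ms k)"
  then obtain s where h: "X (Ms s + (u + Ms k)) - X (Ms s + (v + Ms k)) \<in> J" unfolding E_def by blast
  have "Ms s + (u + Ms k) = Ms (s + k) + u" "Ms s + (v + Ms k) = Ms (s + k) + v"
    by (simp_all add: Ms_add add_ac)
  then have "X (Ms (s + k) + u) - X (Ms (s + k) + v) \<in> J" using h by simp
  then show "E u v" unfolding E_def using u v by blast
qed

lemma E_cancel_x:
  assumes u: "u \<in> WW" and v: "v \<in> WW" and c: "\<And>j. j \<ge> n \<Longrightarrow> lk c j = 0"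
    and e: "E (u + c) (v + c)"
  shows "E u v"
proof -
  define K where "K = (\<Sum>j<n. lk c j)"
  have le: "lk c j \<le> K" if "j < n" for j
    unfolding K_def using that by (intro member_le_sum) auto
  define c' where "c' = Ms K - c"
  have cc: "c + c' = Ms K"
    by (rule poly_mapping_eqI) (auto simp: c'_def lookup_add lookup_minus lk_Ms c le)
  have c'V: "c' \<in> WW" by (rule VV_I) (auto simp: c'_def lookup_minus lk_Ms)
  have "E (u + c + c') (v + c + c')" by (rule E_add[OF e c'V])
  then have "E (u + Ms K) (v + Ms K)" by (simp add: add.assoc cc)
  then show ?thesis by (rule E_unshift[OF u v])
qed

lemma E_cancel_y:
  assumes u: "u \<in> WW" and v: "v \<in> WW" and i: "i < r"
    and e: "E (u + Poly_Mapping.single (n + i) 1) (v + Poly_Mapping.single (n + i) 1)"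
  shows "E u v"
proof -
  let ?k = "n + i"
  have kV: "Poly_Mapping.single ?k b \<in> WW" for b using i by (intro single_VV) simp
  have sD: "Poly_Mapping.single ?k 1 + Poly_Mapping.single ?k (DD - 1) = Poly_Mapping.single ?k DD"
    using DD_pos by (simp flip: single_add)
  have "E (u + Poly_Mapping.single ?k 1 + Poly_Mapping.single ?k (DD - 1)) (v + Poly_Mapping.single ?k 1 + Poly_Mapping.single ?k (DD - 1))"
    by (rule E_add[OF e kV])
  moreover have "u + Poly_Mapping.single ?k 1 + Poly_Mapping.single ?k (DD - 1) = u + Poly_Mapping.single ?k DD"
    "v + Poly_Mapping.single ?k 1 + Poly_Mapping.single ?k (DD - 1) = v + Poly_Mapping.single ?k DD"
    by (metis add.assoc sD)+
  ultimately have e1: "E (u + Poly_Mapping.single ?k DD) (v + Poly_Mapping.single ?k DD)"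
    by simp
  have g: "E (Poly_Mapping.single ?k DD) (cvec i)" by (rule E_gen[OF kV cvec_VV Jgen[OF i]])
  have gu: "E (u + Poly_Mapping.single ?k DD) (u + cvec i)"
    using E_add[OF g u] by (simp add: add.commute)
  have gv: "E (v + Poly_Mapping.single ?k DD) (v + cvec i)"
    using E_add[OF g v] by (simp add: add.commute)
  have "E (u + cvec i) (v + cvec i)"
    by (rule E_trans[OF E_sym[OF gu] E_trans[OF e1 gv]])
  then show ?thesis using E_cancel_x[OF u v, of "cvec i"] by (simp add: lk_cvec)
qed

lemma E_cancel_single:
  assumes u: "u \<in> WW" and v: "v \<in> WW" and k: "k < n + r"
    and e: "E (u + Poly_Mapping.single k 1) (v + Poly_Mapping.single k 1)"
  shows "E u v"
proof (cases "k < n")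
  case True
  show ?thesis by (rule E_cancel_x[OF u v _ e]) (use True in \<open>simp add: lookup_single when_def\<close>)
next
  case False
  then obtain i where ki: "k = n + i" "i < r" using k by (metis add_diff_inverse_nat add_less_cancel_left)
  show ?thesis using E_cancel_y[OF u v ki(2)] e unfolding ki(1) by blast
qed

lemma E_cancel_pow:
  assumes u: "u \<in> WW" and v: "v \<in> WW" and k: "k < n + r"
    and e: "E (u + Poly_Mapping.single k b) (v + Poly_Mapping.single k b)"
  shows "E u v"
  using e
proof (induction b)
  case 0 then show ?case by simp
next
  case (Suc b)
  have "Poly_Mapping.single k (Suc b) = Poly_Mapping.single k b + Poly_Mapping.single k 1"
    by (simp flip: single_add)
  then have "E (u + Poly_Mapping.single k b + Poly_Mapping.single k 1) (v + Poly_Mapping.single k b + Poly_Mapping.single k 1)"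
    using Suc.prems by (simp add: add.assoc)
  then have "E (u + Poly_Mapping.single k b) (v + Poly_Mapping.single k b)"
    by (rule E_cancel_single[OF VV_add[OF u single_VV[OF k]] VV_add[OF v single_VV[OF k]] k])
  then show ?case by (rule Suc.IH)
qed

lemma E_cancel:
  assumes w: "w \<in> WW" and u: "u \<in> WW" and v: "v \<in> WW" and e: "E (u + w) (v + w)"
  shows "E u v"
proof -
  have "w \<in> WW \<longrightarrow> (\<forall>u v. u \<in> WW \<longrightarrow> v \<in> WW \<longrightarrow> E (u + w) (v + w) \<longrightarrow> E u v)"
  proof (induction w rule: update_induct)
    case const then show ?case by simp
  next
    case (update f x b)
    show ?case
    proof (intro impI allI)
      fix u v assume upd: "Poly_Mapping.update x b f \<in> WW" and u: "u \<in> WW" and v: "v \<in> WW"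
        and e: "E (u + Poly_Mapping.update x b f) (v + Poly_Mapping.update x b f)"
      have eq: "Poly_Mapping.update x b f = f + Poly_Mapping.single x b"
        by (rule poly_mapping_eqI) (use update.hyps(1) in \<open>auto simp: lookup_update lookup_add lookup_single when_def in_keys_iff\<close>)
      have x: "x < n + r" using upd update.hyps(2)
        by (auto simp: VV_def keys_update)
      have fV: "f \<in> WW" using upd update.hyps(1) by (auto simp: VV_def keys_update split: if_splits)
      have "E (u + f + Poly_Mapping.single x b) (v + f + Poly_Mapping.single x b)"
        using e by (simp add: eq add.assoc)
      then have "E (u + f) (v + f)"
        by (rule E_cancel_pow[OF VV_add[OF u fV] VV_add[OF v fV] x])
      then show "E u v" using update.IH fV u v by blast
    qed
  qed
  then show ?thesis using assms by blast
qed

end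

context SC begin

lemma Phi_ge_term: "i < r \<Longrightarrow> int (a i j) * int (lk v (n + i)) \<le> Phi v j"
proof -
  assume i: "i < r"
  have "int (a i j) * int (lk v (n + i)) \<le> (\<Sum>i<r. int (a i j) * int (lk v (n + i)))"
    by (rule member_le_sum) (use i in auto)
  then show ?thesis unfolding Phi_def by (simp add: add_increasing)
qed

lemma noY_eq:
  assumes nu: "\<forall>i<r. lk u (n + i) = 0" and nv: "\<forall>i<r. lk v (n + i) = 0"
    and P: "\<forall>j<n. Phi u j = Phi v j" and k: "k < n"
  shows "lk u k = lk v k"
proof -
  have "Phi u k = Phi v k" using P k by blast
  then have e: "int (d k) * int (lk u k) = int (d k) * int (lk v k)"
    unfolding Phi_def using nu nv by simp
  have "0 < d k" using dpos k by blast
  then show ?thesis using e by simp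
qed

lemma Phi_noY: "(\<forall>i<r. lk u (n + i) = 0) \<Longrightarrow> Phi u j = int (d j) * int (lk u j)"
  unfolding Phi_def by simp

end

context SCJ begin

abbreviation mm :: "'a mpoly" where "mm \<equiv> X (Ms 1)"

lemma X_Ms: "X (Ms s) = mm ^ s"
proof (induction s)
  case 0 then show ?case by simp
next
  case (Suc s)
  have eq: "Ms (Suc s) = Ms 1 + Ms s" using Ms_add[of 1 s] by simp
  have "X (Ms (Suc s)) = X (Ms 1) * (X (Ms s) :: 'a mpoly)" unfolding eq by (simp only: mult_single mult_1)
  then show ?case unfolding Suc.IH by simp
qed

lemma E_m: "E u v \<Longrightarrow> \<exists>s. mm ^ s * (X u - X v) \<in> J"
proof -
  assume "E u v"
  then obtain s where h: "X (Ms s + u) - X (Ms s + v) \<in> J" unfolding E_def by blast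
  have "X (Ms s + u) - X (Ms s + v) = X (Ms s) * (X u - X v)" by (simp only: Xshift)
  also have "\<dots> = mm ^ s * (X u - X v)" by (simp only: X_Ms[of s])
  finally show ?thesis using h by metis
qed

definition J' :: "'a mpoly set" where "J' = {j + mm * h | j h. j \<in> J \<and> h \<in> SS}"

lemma mm_S: "mm \<in> SS" by (rule X_in_poly_ring[OF Ms_VV])

lemma J'_I: "j \<in> J \<Longrightarrow> h \<in> SS \<Longrightarrow> j + mm * h \<in> J'"
  unfolding J'_def by blast

lemma J'_E: "x \<in> J' \<Longrightarrow> (\<And>j h. x = j + mm * h \<Longrightarrow> j \<in> J \<Longrightarrow> h \<in> SS \<Longrightarrow> P) \<Longrightarrow> P"
  unfolding J'_def by blast

lemma sideal_J': "sideal SS J'"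
proof -
  note S = subr_poly_ring[of "TYPE('a)" "n + r"]
  have S0: "0 \<in> SS" by (rule subr_0[OF S])
  have Sadd: "x + y \<in> SS" "x * y \<in> SS" if "x \<in> SS" "y \<in> SS" for x y
    using S that unfolding subr_def by blast+
  have a: "0 \<in> J'" using J'_I[OF sideal_0[OF J] S0] by simp
  have b: "J' \<subseteq> SS"
  proof
    fix x assume "x \<in> J'"
    then show "x \<in> SS"
    proof (rule J'_E)
      fix j h assume "x = j + mm * h" "j \<in> J" "h \<in> SS"
      then show "x \<in> SS" using Sadd sideal_sub[OF J] mm_S by metis
    qed
  qed
  have c: "x + y \<in> J'" if hx: "x \<in> J'" and hy: "y \<in> J'" for x y
  proof -
    obtain j1 h1 where 1: "x = j1 + mm * h1" "j1 \<in> J" "h1 \<in> SS" using hx by (rule J'_E)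
    obtain j2 h2 where 2: "y = j2 + mm * h2" "j2 \<in> J" "h2 \<in> SS" using hy by (rule J'_E)
    have "x + y = (j1 + j2) + mm * (h1 + h2)" using 1 2 by (simp add: algebra_simps)
    then show ?thesis using J'_I[OF sideal_add[OF J 1(2) 2(2)] Sadd(1)[OF 1(3) 2(3)]] by simp
  qed
  have d: "s * x \<in> J'" if hx: "x \<in> J'" and hs: "s \<in> SS" for x s
  proof -
    obtain j1 h1 where 1: "x = j1 + mm * h1" "j1 \<in> J" "h1 \<in> SS" using hx by (rule J'_E)
    have "s * x = s * j1 + mm * (s * h1)" using 1 by (simp add: algebra_simps)
    then show ?thesis using J'_I[OF sideal_mult[OF J 1(2) hs] Sadd(2)[OF hs 1(3)]] by simp
  qed
  show ?thesis unfolding sideal_def using a b c d by blast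
qed

lemma X_single_pow: "X (Poly_Mapping.single k 1) ^ b = (X (Poly_Mapping.single k b) :: 'a mpoly)"
proof (induction b)
  case 0 then show ?case by simp
next
  case (Suc b)
  have "Poly_Mapping.single k (Suc b) = Poly_Mapping.single k 1 + Poly_Mapping.single k b"
    by (simp flip: single_add)
  then show ?case using Suc by (simp add: mult_single)
qed

lemma mono_y:
  assumes u: "u \<in> WW" and i: "i < r" and pos: "lk u (n + i) > 0"
  shows "X u ^ DD \<in> J'"
proof -
  let ?k = "n + i"
  define u' where "u' = u - Poly_Mapping.single ?k 1"
  have uu: "u = Poly_Mapping.single ?k 1 + u'"
    by (rule poly_mapping_eqI) (use pos in \<open>auto simp: u'_def lookup_add lookup_minus lookup_single when_def\<close>)
  have u'V: "u' \<in> WW" by (rule VV_I) (use VV_D[OF u] in \<open>auto simp: u'_def lookup_minus\<close>)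
  define cr where "cr = cvec i - Ms 1"
  have cc: "cvec i = Ms 1 + cr"
    by (rule poly_mapping_eqI) (use cvec_ge[OF i] in \<open>auto simp: cr_def lookup_add lookup_minus lk_Ms lk_cvec\<close>)
  have crV: "cr \<in> WW" by (rule VV_I) (auto simp: cr_def lookup_minus lk_Ms lk_cvec)
  have xu: "X u = X (Poly_Mapping.single ?k 1) * X u'" unfolding uu by (simp add: mult_single)
  have p1: "X u ^ DD = X (Poly_Mapping.single ?k 1) ^ DD * X u' ^ DD"
    unfolding xu by (rule power_mult_distrib)
  have p2: "X (Poly_Mapping.single ?k 1) ^ DD = (X (Poly_Mapping.single ?k DD) :: 'a mpoly)"
    by (rule X_single_pow)
  have XC: "X (cvec i) = mm * X cr" unfolding cc by (simp add: mult_single)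
  have eq: "X u ^ DD = (X (Poly_Mapping.single ?k DD) - X (cvec i)) * X u' ^ DD + mm * (X cr * X u' ^ DD)"
    unfolding p1 p2 XC by (simp add: algebra_simps)
  have 1: "(X (Poly_Mapping.single ?k DD) - X (cvec i)) * X u' ^ DD \<in> J"
    by (rule sideal_mult'[OF J Jgen[OF i] subr_pow[OF subr_poly_ring X_in_poly_ring[OF u'V]]])
  have 2: "X cr * X u' ^ DD \<in> SS"
    using subr_poly_ring X_in_poly_ring[OF crV] subr_pow[OF subr_poly_ring X_in_poly_ring[OF u'V]]
    unfolding subr_def by blast
  show ?thesis unfolding eq by (rule J'_I[OF 1 2])
qed

lemma mono_x:
  assumes u: "u \<in> WW" and full: "\<forall>j<n. lk u j \<ge> 1"
  shows "X u ^ DD \<in> J'"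
proof -
  define u' where "u' = u - Ms 1"
  have uu: "u = Ms 1 + u'"
    by (rule poly_mapping_eqI) (use full in \<open>auto simp: u'_def lookup_add lookup_minus lk_Ms\<close>)
  have u'V: "u' \<in> WW" by (rule VV_I) (use VV_D[OF u] in \<open>auto simp: u'_def lookup_minus\<close>)
  have "X u ^ DD = mm * (X u' * X u ^ (DD - 1))"
  proof -
    have "DD = Suc (DD - 1)" using DD_pos by simp
    then have "X u ^ DD = X u * X u ^ (DD - 1)" by (metis power_Suc)
    also have xu: "X u = mm * X u'" unfolding uu by (simp add: mult_single)
    have "X u * X u ^ (DD - 1) = (mm * X u') * X u ^ (DD - 1)"
      using xu by (rule arg_cong[where f="\<lambda>z. z * X u ^ (DD - 1)"])
    finally show ?thesis by (simp only: mult.assoc)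
  qed
  moreover have "X u' * X u ^ (DD - 1) \<in> SS"
    using subr_poly_ring X_in_poly_ring[OF u'V] subr_pow[OF subr_poly_ring X_in_poly_ring[OF u]]
    unfolding subr_def by blast
  ultimately show ?thesis using J'_I[OF sideal_0[OF J]] by simp
qed

lemma mono_J':
  assumes u: "u \<in> WW" and v: "v \<in> WW" and P: "\<forall>j<n. Phi u j = Phi v j"
    and ny: "\<not> ((\<forall>i<r. lk u (n + i) = 0) \<and> (\<forall>i<r. lk v (n + i) = 0))"
  shows "X u ^ DD \<in> J'"
proof (cases "\<exists>i<r. lk u (n + i) > 0")
  case True
  then show ?thesis using mono_y[OF u] by blast
next
  case False
  then have nu: "\<forall>i<r. lk u (n + i) = 0" by auto
  then obtain i where i: "i < r" "lk v (n + i) > 0" using ny by auto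
  have "\<forall>j<n. lk u j \<ge> 1"
  proof (intro allI impI)
    fix j assume j: "j < n"
    have "0 < int (a i j) * int (lk v (n + i))" using apos i j by simp
    also have "\<dots> \<le> Phi v j" by (rule Phi_ge_term[OF i(1)])
    also have "\<dots> = int (d j) * int (lk u j)" using P j Phi_noY[OF nu] by simp
    finally show "lk u j \<ge> 1" by (simp add: Suc_le_eq zero_less_mult_iff)
  qed
  then show ?thesis by (rule mono_x[OF u])
qed

lemma E_rad:
  assumes u: "u \<in> WW" and v: "v \<in> WW" and P: "\<forall>j<n. Phi u j = Phi v j" and e: "E u v"
  shows "\<exists>k. (X u - X v) ^ k \<in> J"
proof (cases "(\<forall>i<r. lk u (n + i) = 0) \<and> (\<forall>i<r. lk v (n + i) = 0)")
  case True
  note noY = True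
  have "u = v"
  proof (rule VV_eqI[OF u v])
    fix k assume k: "k < n + r"
    show "lk u k = lk v k"
    proof (cases "k < n")
      case True
      show ?thesis using noY_eq[OF conjunct1[OF noY] conjunct2[OF noY] P True] .
    next
      case False
      then obtain i where "k = n + i" "i < r" using k by (metis add_diff_inverse_nat add_less_cancel_left)
      then show ?thesis using True by simp
    qed
  qed
  then have "(X u - X v) ^ 1 \<in> J" using sideal_0[OF J] by simp
  then show ?thesis by blast
next
  case False
  note S = subr_poly_ring[of "TYPE('a)" "n + r"]
  have 1: "X u ^ DD \<in> J'" by (rule mono_J'[OF u v P False])
  have P': "\<forall>j<n. Phi v j = Phi u j" using P by simp
  have F': "\<not> ((\<forall>i<r. lk v (n + i) = 0) \<and> (\<forall>i<r. lk u (n + i) = 0))" using False by blast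
  have 2: "X v ^ DD \<in> J'" by (rule mono_J'[OF v u P' F'])
  have 3: "(- X v) ^ DD \<in> J'"
  proof -
    have m1: "-1 \<in> SS" using S unfolding subr_def by blast
    have "(-1) ^ DD * X v ^ DD \<in> J'" by (rule sideal_mult[OF sideal_J' 2 subr_pow[OF S m1]])
    then show ?thesis by (subst power_minus)
  qed
  have xu: "X u \<in> SS" by (rule X_in_poly_ring[OF u])
  have xv: "- X v \<in> SS" using X_in_poly_ring[OF v] S unfolding subr_def by blast
  have "(X u + - X v) ^ (DD + DD) \<in> J'" by (rule rad_add[OF S sideal_J' xu xv 1 3])
  then obtain j h where jh: "(X u - X v) ^ (DD + DD) = j + mm * h" "j \<in> J" "h \<in> SS"
    by (rule J'_E) simp
  then have g: "(X u - X v) ^ (DD + DD) - mm * h \<in> J" by simp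
  obtain s where s: "mm ^ s * (X u - X v) \<in> J" using E_m[OF e] by blast
  have gS: "X u - X v \<in> SS" using binom_poly[OF u v] .
  show ?thesis using rad_final[OF S J mm_S gS jh(3) g s] by blast
qed

end

definition sc :: "nat \<Rightarrow> (nat \<Rightarrow>\<^sub>0 nat) \<Rightarrow> (nat \<Rightarrow>\<^sub>0 nat)" where
  "sc t w = Poly_Mapping.map (\<lambda>x. t * x) w"

lemma lk_sc: "lk (sc t w) j = t * lk w j"
  unfolding sc_def by (simp add: map.rep_eq when_def)

lemma sc_VV: "w \<in> VV N \<Longrightarrow> sc t w \<in> VV N"
proof -
  assume w: "w \<in> VV N"
  have "Poly_Mapping.keys (sc t w) \<subseteq> Poly_Mapping.keys w"
    by (auto simp: in_keys_iff lk_sc)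
  then show ?thesis using w unfolding VV_def by blast
qed

context SC begin

lemma Phi_sc: "Phi (sc t w) j = int t * Phi w j"
  unfolding Phi_def by (simp add: lk_sc algebra_simps sum_distrib_left)

end

locale SCW = SCJ +
  fixes wp wm :: "nat \<Rightarrow>\<^sub>0 nat" and g :: nat and l1 l2 :: int
  assumes wpV: "wp \<in> VV (n + r)" and wmV: "wm \<in> VV (n + r)"
    and wPhi: "\<forall>j<n. Phi wp j = Phi wm j"
    and wR: "lk wp (n + r - 1) = lk wm (n + r - 1) + g"
    and gpos: "g > 0"
    and gmin: "\<And>p q g'. p \<in> VV (n + r) \<Longrightarrow> q \<in> VV (n + r) \<Longrightarrow> \<forall>j<n. Phi p j = Phi q j \<Longrightarrow>
       lk p (n + r - 1) = lk q (n + r - 1) + g' \<Longrightarrow> 0 < g' \<Longrightarrow> g \<le> g'"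
    and lorth: "l1 * (int (lk wp n) - int (lk wm n)) + l2 * (int (lk wp (n + 1)) - int (lk wm (n + 1))) = 0"
    and J1: "\<And>p q. p \<in> VV (n + r) \<Longrightarrow> q \<in> VV (n + r) \<Longrightarrow> \<forall>j<n. Phi p j = Phi q j \<Longrightarrow>
       lk p (n + r - 1) = lk q (n + r - 1) \<Longrightarrow> X p - X q \<in> J"
    and J2: "\<And>p q. p \<in> VV (n + r) \<Longrightarrow> q \<in> VV (n + r) \<Longrightarrow> \<forall>j<n. Phi p j = Phi q j \<Longrightarrow>
       l1 * int (lk p n) + l2 * int (lk p (n + 1)) = l1 * int (lk q n) + l2 * int (lk q (n + 1)) \<Longrightarrow> X p - X q \<in> J"
begin

lemma E_ge:
  assumes p: "p \<in> WW" and q: "q \<in> WW" and P: "\<forall>j<n. Phi p j = Phi q j"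
    and ge: "lk p (n + r - 1) \<ge> lk q (n + r - 1)"
  shows "E p q"
proof -
  let ?R = "n + r - 1"
  define k where "k = lk p ?R - lk q ?R"
  define t where "t = k div g"
  define p' where "p' = p + sc t wm"
  define q' where "q' = q + sc t wp"
  have p'V: "p' \<in> WW" unfolding p'_def by (rule VV_add[OF p sc_VV[OF wmV]])
  have q'V: "q' \<in> WW" unfolding q'_def by (rule VV_add[OF q sc_VV[OF wpV]])
  have P': "\<forall>j<n. Phi p' j = Phi q' j"
    using P wPhi unfolding p'_def q'_def by (simp add: Phi_add Phi_sc)
  have kk: "k = t * g + k mod g" unfolding t_def by simp
  have lp': "lk p' ?R = lk q' ?R + k mod g"
  proof -
    have "lk p' ?R = lk p ?R + t * lk wm ?R" unfolding p'_def by (simp add: lookup_add lk_sc)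
    moreover have "lk q' ?R = lk q ?R + t * lk wm ?R + t * g" unfolding q'_def lookup_add lk_sc wR
      by (simp add: algebra_simps)
    moreover have "lk p ?R = lk q ?R + k" unfolding k_def using ge by simp
    ultimately show ?thesis using kk by simp
  qed
  have "k mod g = 0"
  proof (rule ccontr)
    assume "k mod g \<noteq> 0"
    then have "g \<le> k mod g" using gmin[OF p'V q'V P' lp'] by simp
    moreover have "k mod g < g" using gpos by simp
    ultimately show False by simp
  qed
  then have e1: "E (p + sc t wm) (q + sc t wp)" unfolding p'_def[symmetric] q'_def[symmetric] using lp' by (intro E_gen[OF p'V q'V J1[OF p'V q'V P']]) simp
  have lsc: "l1 * int (lk (sc t wp) n) + l2 * int (lk (sc t wp) (n + 1))
      = l1 * int (lk (sc t wm) n) + l2 * int (lk (sc t wm) (n + 1))"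
  proof -
    have "l1 * int (lk (sc t wp) n) + l2 * int (lk (sc t wp) (n + 1))
        - (l1 * int (lk (sc t wm) n) + l2 * int (lk (sc t wm) (n + 1)))
        = int t * (l1 * (int (lk wp n) - int (lk wm n)) + l2 * (int (lk wp (n + 1)) - int (lk wm (n + 1))))"
      by (simp add: lk_sc algebra_simps)
    then show ?thesis using lorth by simp
  qed
  have Psc: "\<forall>j<n. Phi (sc t wp) j = Phi (sc t wm) j" using wPhi by (simp add: Phi_sc)
  have e2: "E (sc t wp) (sc t wm)"
    by (rule E_gen[OF sc_VV[OF wpV] sc_VV[OF wmV] J2[OF sc_VV[OF wpV] sc_VV[OF wmV] Psc lsc]])
  have e3: "E (q + sc t wp) (q + sc t wm)"
    using E_add[OF e2 q] by (simp add: add.commute)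
  have "E (p + sc t wm) (q + sc t wm)"
    using E_trans[OF e1 e3] .
  then show "E p q" by (rule E_cancel[OF sc_VV[OF wmV] p q])
qed

lemma E_all:
  assumes p: "p \<in> WW" and q: "q \<in> WW" and P: "\<forall>j<n. Phi p j = Phi q j"
  shows "E p q"
proof (cases "lk p (n + r - 1) \<ge> lk q (n + r - 1)")
  case True then show ?thesis by (rule E_ge[OF p q P])
next
  case False
  have "E q p" by (rule E_ge[OF q p]) (use P False in auto)
  then show ?thesis by (rule E_sym)
qed

end

lemma sideal_ideal_sum:
  assumes S: "subr (poly_ring T N :: 'a::field mpoly set)" and I1: "sideal (poly_ring T N) (I1 :: 'a mpoly set)"
    and I2: "sideal (poly_ring T N) I2"
  shows "sideal (poly_ring T N) (ideal_sum I1 I2)"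
proof -
  have a: "0 \<in> ideal_sum I1 I2" unfolding ideal_sum_def using sideal_0[OF I1] sideal_0[OF I2] by force
  have b: "ideal_sum I1 I2 \<subseteq> poly_ring T N"
    unfolding ideal_sum_def using sideal_sub[OF I1] sideal_sub[OF I2] S unfolding subr_def by blast
  have c: "x + y \<in> ideal_sum I1 I2" if hx: "x \<in> ideal_sum I1 I2" and hy: "y \<in> ideal_sum I1 I2" for x y
  proof -
    obtain f1 g1 where 1: "x = f1 + g1" "f1 \<in> I1" "g1 \<in> I2" using hx unfolding ideal_sum_def by blast
    obtain f2 g2 where 2: "y = f2 + g2" "f2 \<in> I1" "g2 \<in> I2" using hy unfolding ideal_sum_def by blast
    have "x + y = (f1 + f2) + (g1 + g2)" using 1 2 by (simp add: algebra_simps)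
    then show ?thesis unfolding ideal_sum_def using sideal_add[OF I1 1(2) 2(2)] sideal_add[OF I2 1(3) 2(3)] by blast
  qed
  have d: "s * x \<in> ideal_sum I1 I2" if hx: "x \<in> ideal_sum I1 I2" and hs: "s \<in> poly_ring T N" for x s
  proof -
    obtain f1 g1 where 1: "x = f1 + g1" "f1 \<in> I1" "g1 \<in> I2" using hx unfolding ideal_sum_def by blast
    have "s * x = s * f1 + s * g1" using 1 by (simp add: algebra_simps)
    then show ?thesis unfolding ideal_sum_def using sideal_mult[OF I1 1(2) hs] sideal_mult[OF I2 1(3) hs] by blast
  qed
  show ?thesis unfolding sideal_def using a b c d by blast
qed

lemma sum_if_eq_lt: "(\<Sum>i<(N::nat). if i = a0 then c else 0) = (if a0 < N then c else (0::'b::comm_monoid_add))"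
  by (induction N) auto

lemma Lam_sum2:
  fixes u :: "nat \<Rightarrow>\<^sub>0 nat" and N :: nat
  assumes "a0 < N" "b0 < N" "a0 \<noteq> b0"
  shows "(\<Sum>i<N. int (lk u i) * (if i = a0 then x else if i = b0 then y else 0))
    = x * int (lk u a0) + y * int (lk u b0)"
proof -
  have "(\<Sum>i<N. int (lk u i) * (if i = a0 then x else if i = b0 then y else 0))
     = (\<Sum>i<N. (if i = a0 then x * int (lk u a0) else 0) + (if i = b0 then y * int (lk u b0) else 0))"
    by (rule sum.cong) (use assms in auto)
  also have "\<dots> = x * int (lk u a0) + y * int (lk u b0)"
    unfolding sum.distrib sum_if_eq_lt using assms by simp
  finally show ?thesis .
qed

lemma Lam_sum1:
  fixes u :: "nat \<Rightarrow>\<^sub>0 nat" and N :: nat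
  assumes "a0 < N"
  shows "(\<Sum>i<N. int (lk u i) * (if i = a0 then 1 else 0)) = int (lk u a0)"
proof -
  have "(\<Sum>i<N. int (lk u i) * (if i = a0 then 1 else 0)) = (\<Sum>i<N. if i = a0 then int (lk u a0) else 0)"
    by (rule sum.cong) auto
  then show ?thesis unfolding sum_if_eq_lt using assms by simp
qed

context SC begin

lemma main: "radical_splittable TYPE('a::field) (n + r) AA"
proof -
  let ?R = "n + r - 1"
  let ?W = "VV (n + r)"
  let ?S = "poly_ring TYPE('a) (n + r)"
  have R: "?R < n + r" "n \<le> ?R" "?R \<noteq> n" "?R \<noteq> n + 1" "n + 1 < n + r" using r3 by auto
  define Pg where "Pg g \<longleftrightarrow> 0 < g \<and> (\<exists>p q. p \<in> ?W \<and> q \<in> ?W \<and> (\<forall>j<n. Phi p j = Phi q j) \<and> lk p ?R = lk q ?R + g)" for g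
  have rr: "n + (r - 1) = ?R" "r - 1 < r" using r3 by auto
  have ex: "Pg DD" unfolding Pg_def
  proof (intro conjI exI)
    show "0 < DD" by (rule DD_pos)
    show "Poly_Mapping.single ?R DD \<in> ?W" by (rule single_VV[OF R(1)])
    show "cvec (r - 1) \<in> ?W" by (rule cvec_VV)
    show "\<forall>j<n. Phi (Poly_Mapping.single ?R DD) j = Phi (cvec (r - 1)) j"
      using gen_pair[OF rr(2)] unfolding rr(1) .
    show "lk (Poly_Mapping.single ?R DD) ?R = lk (cvec (r - 1)) ?R + DD"
      using R by (simp add: lk_cvec)
  qed
  define g where "g = (LEAST g. Pg g)"
  have Pgg: "Pg g" unfolding g_def by (rule LeastI[of Pg, OF ex])
  then obtain wp wm where w: "wp \<in> ?W" "wm \<in> ?W" "\<forall>j<n. Phi wp j = Phi wm j" "lk wp ?R = lk wm ?R + g"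
    and gpos: "0 < g" unfolding Pg_def by blast
  have gmin: "g \<le> g'" if "p \<in> ?W" "q \<in> ?W" "\<forall>j<n. Phi p j = Phi q j" "lk p ?R = lk q ?R + g'" "0 < g'" for p q g'
  proof -
    have "Pg g'" unfolding Pg_def using that by blast
    then show ?thesis unfolding g_def by (rule Least_le)
  qed
  define d1 where "d1 = int (lk wp n) - int (lk wm n)"
  define d2 where "d2 = int (lk wp (n + 1)) - int (lk wm (n + 1))"
  define l1 where "l1 = (if d1 = 0 \<and> d2 = 0 then 1 else d2)"
  define l2 where "l2 = (if d1 = 0 \<and> d2 = 0 then 0 else - d1)"
  have lorth: "l1 * d1 + l2 * d2 = 0" unfolding l1_def l2_def by auto
  have lnz: "l1 \<noteq> 0 \<or> l2 \<noteq> 0" unfolding l1_def l2_def by auto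
  define la1 :: "nat \<Rightarrow> int" where "la1 = (\<lambda>i. if i = ?R then 1 else 0)"
  define la2 :: "nat \<Rightarrow> int" where "la2 = (\<lambda>i. if i = n then l1 else if i = n + 1 then l2 else 0)"
  have Lam1: "Lam la1 u = int (lk u ?R)" for u
    unfolding Lam_def la1_def by (rule Lam_sum1[OF R(1)])
  have Lam2: "Lam la2 u = l1 * int (lk u n) + l2 * int (lk u (n + 1))" for u
    unfolding Lam_def la2_def by (rule Lam_sum2) (use R in auto)
  define I1 :: "'a mpoly set" where "I1 = toric_ideal TYPE('a) (n + r) (tw la1)"
  define I2 :: "'a mpoly set" where "I2 = toric_ideal TYPE('a) (n + r) (tw la2)"
  define J where "J = ideal_sum I1 I2"
  have sI1: "sideal ?S I1" unfolding I1_def by (rule sideal_toric)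
  have sI2: "sideal ?S I2" unfolding I2_def by (rule sideal_toric)
  have sJ: "sideal ?S J" unfolding J_def by (rule sideal_ideal_sum[OF subr_poly_ring sI1 sI2])
  have I1J: "x \<in> J" if "x \<in> I1" for x
    unfolding J_def ideal_sum_def using that sideal_0[OF sI2] by force
  have I2J: "x \<in> J" if "x \<in> I2" for x
    unfolding J_def ideal_sum_def using that sideal_0[OF sI1] by force
  have J1: "X p - X q \<in> J" if "p \<in> ?W" "q \<in> ?W" "\<forall>j<n. Phi p j = Phi q j" "lk p ?R = lk q ?R" for p q
  proof -
    have "cfg_exp (tw la1) p = cfg_exp (tw la1) q" using that tw_eq[OF that(1,2)] Lam1 by simp
    then have "X p - X q \<in> I1" unfolding I1_def by (rule binom_in[OF that(1,2)])
    then show ?thesis by (rule I1J)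
  qed
  have J2: "X p - X q \<in> J" if "p \<in> ?W" "q \<in> ?W" "\<forall>j<n. Phi p j = Phi q j"
    "l1 * int (lk p n) + l2 * int (lk p (n + 1)) = l1 * int (lk q n) + l2 * int (lk q (n + 1))" for p q
  proof -
    have "cfg_exp (tw la2) p = cfg_exp (tw la2) q" using that tw_eq[OF that(1,2)] Lam2 by simp
    then have "X p - X q \<in> I2" unfolding I2_def by (rule binom_in[OF that(1,2)])
    then show ?thesis by (rule I2J)
  qed
  have Jgen: "X (Poly_Mapping.single (n + i) DD) - X (cvec i) \<in> J" if i: "i < r" for i
  proof (cases "i = r - 1")
    case True
    show ?thesis
    proof (rule J2[OF single_VV cvec_VV gen_pair[OF i]])
      show "n + i < n + r" using i by simp
      show "l1 * int (lk (Poly_Mapping.single (n + i) DD) n) + l2 * int (lk (Poly_Mapping.single (n + i) DD) (n + 1)) =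
          l1 * int (lk (cvec i) n) + l2 * int (lk (cvec i) (n + 1))"
        using True R by (simp add: lookup_single when_def lk_cvec)
    qed
  next
    case False
    show ?thesis
    proof (rule J1[OF single_VV cvec_VV gen_pair[OF i]])
      show "n + i < n + r" using i by simp
      show "lk (Poly_Mapping.single (n + i) DD) ?R = lk (cvec i) ?R"
      proof -
        have "n + i \<noteq> ?R" using False i by auto
        then show ?thesis using R by (simp add: lookup_single when_def lk_cvec)
      qed
    qed
  qed
  interpret W: SCW n r d a J wp wm g l1 l2
  proof unfold_locales
    show "sideal ?S J" by (rule sJ)
    show "\<And>i. i < r \<Longrightarrow> X (Poly_Mapping.single (n + i) DD) - X (cvec i) \<in> J" by (rule Jgen)
    show "wp \<in> ?W" "wm \<in> ?W" "\<forall>j<n. Phi wp j = Phi wm j" "lk wp ?R = lk wm ?R + g" "0 < g"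
      using w gpos by auto
    show "\<And>p q g'. p \<in> ?W \<Longrightarrow> q \<in> ?W \<Longrightarrow> \<forall>j<n. Phi p j = Phi q j \<Longrightarrow> lk p ?R = lk q ?R + g' \<Longrightarrow> 0 < g' \<Longrightarrow> g \<le> g'"
      by (rule gmin)
    show "l1 * (int (lk wp n) - int (lk wm n)) + l2 * (int (lk wp (n + 1)) - int (lk wm (n + 1))) = 0"
      using lorth unfolding d1_def d2_def .
    show "\<And>p q. p \<in> ?W \<Longrightarrow> q \<in> ?W \<Longrightarrow> \<forall>j<n. Phi p j = Phi q j \<Longrightarrow> lk p ?R = lk q ?R \<Longrightarrow> X p - X q \<in> J"
      by (rule J1)
    show "\<And>p q. p \<in> ?W \<Longrightarrow> q \<in> ?W \<Longrightarrow> \<forall>j<n. Phi p j = Phi q j \<Longrightarrow>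
       l1 * int (lk p n) + l2 * int (lk p (n + 1)) = l1 * int (lk q n) + l2 * int (lk q (n + 1)) \<Longrightarrow> X p - X q \<in> J"
      by (rule J2)
  qed
  have JA: "J \<subseteq> toric_ideal TYPE('a) (n + r) AA"
  proof
    fix x assume "x \<in> J"
    then obtain f h where fh: "x = f + h" "f \<in> I1" "h \<in> I2" unfolding J_def ideal_sum_def by blast
    have "f \<in> toric_ideal TYPE('a) (n + r) AA" using fh(2) tw_sub unfolding I1_def by blast
    moreover have "h \<in> toric_ideal TYPE('a) (n + r) AA" using fh(3) tw_sub unfolding I2_def by blast
    ultimately show "x \<in> toric_ideal TYPE('a) (n + r) AA" unfolding fh(1) by (rule sideal_add[OF sideal_toric])
  qed
  have eq: "toric_ideal TYPE('a) (n + r) AA = rad TYPE('a) (n + r) (ideal_sum I1 I2)"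
  proof
    show "toric_ideal TYPE('a) (n + r) AA \<subseteq> rad TYPE('a) (n + r) (ideal_sum I1 I2)"
    proof
      fix f :: "'a mpoly" assume f: "f \<in> toric_ideal TYPE('a) (n + r) AA"
      have "f \<in> radset ?S J"
      proof (rule toric_span[OF rad_sideal[OF subr_poly_ring sJ] _ f])
        fix u v assume u: "u \<in> ?W" and v: "v \<in> ?W" and e: "cfg_exp AA u = cfg_exp AA v"
        have P: "\<forall>j<n. Phi u j = Phi v j" using AA_eq[OF u v] e by blast
        have "\<exists>k. (X u - X v) ^ k \<in> J" by (rule W.E_rad[OF u v P W.E_all[OF u v P]])
        then show "(X u - X v :: 'a mpoly) \<in> radset ?S J" unfolding radset_def using binom_poly[OF u v] by blast
      qed
      then show "f \<in> rad TYPE('a) (n + r) (ideal_sum I1 I2)" unfolding radset_def rad_def J_def .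
    qed
  next
    show "rad TYPE('a) (n + r) (ideal_sum I1 I2) \<subseteq> toric_ideal TYPE('a) (n + r) AA"
    proof
      fix f :: "'a mpoly" assume "f \<in> rad TYPE('a) (n + r) (ideal_sum I1 I2)"
      then obtain k where f: "f \<in> ?S" "f ^ k \<in> J" unfolding rad_def J_def by blast
      have "f ^ k \<in> toric_ideal TYPE('a) (n + r) AA" using f(2) JA by blast
      then show "f \<in> toric_ideal TYPE('a) (n + r) AA" by (rule toric_radical[OF f(1)])
    qed
  qed
  have ne1: "I1 \<noteq> toric_ideal TYPE('a) (n + r) AA"
  proof
    assume h: "I1 = toric_ideal TYPE('a) (n + r) AA"
    let ?p = "Poly_Mapping.single ?R DD" and ?q = "cvec (r - 1)"
    have pV: "?p \<in> ?W" by (rule single_VV[OF R(1)])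
    have P: "\<forall>j<n. Phi ?p j = Phi ?q j" using gen_pair[OF rr(2)] unfolding rr(1) .
    have "(X ?p - X ?q :: 'a mpoly) \<in> toric_ideal TYPE('a) (n + r) AA"
      by (rule binom_in[OF pV cvec_VV]) (use AA_eq[OF pV cvec_VV] P in blast)
    moreover have "cfg_exp (tw la1) ?p \<noteq> cfg_exp (tw la1) ?q"
      using tw_eq[OF pV cvec_VV] Lam1 R DD_pos by (simp add: lk_cvec)
    then have "(X ?p - X ?q :: 'a mpoly) \<notin> I1" unfolding I1_def by (rule binom_notin)
    ultimately show False using h by simp
  qed
  have ne2: "I2 \<noteq> toric_ideal TYPE('a) (n + r) AA"
  proof
    assume h: "I2 = toric_ideal TYPE('a) (n + r) AA"
    obtain i :: nat where i: "i < 2" "(if i = 0 then l1 else l2) \<noteq> 0" using lnz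
      by (metis less_2_cases_iff One_nat_def one_neq_zero)
    have ir: "i < r" using i r3 by simp
    let ?p = "Poly_Mapping.single (n + i) DD" and ?q = "cvec i"
    have pV: "?p \<in> ?W" by (rule single_VV) (use ir in simp)
    have P: "\<forall>j<n. Phi ?p j = Phi ?q j" by (rule gen_pair[OF ir])
    have "(X ?p - X ?q :: 'a mpoly) \<in> toric_ideal TYPE('a) (n + r) AA"
      by (rule binom_in[OF pV cvec_VV]) (use AA_eq[OF pV cvec_VV] P in blast)
    moreover have "Lam la2 ?p \<noteq> Lam la2 ?q"
    proof -
      have "Lam la2 ?q = 0" unfolding Lam2 by (simp add: lk_cvec)
      moreover have "Lam la2 ?p = (if i = 0 then l1 else l2) * int DD"
        unfolding Lam2 using i by (auto simp: lookup_single when_def)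
      ultimately show ?thesis using i DD_pos by simp
    qed
    then have "cfg_exp (tw la2) ?p \<noteq> cfg_exp (tw la2) ?q" using tw_eq[OF pV cvec_VV] by blast
    then have "(X ?p - X ?q :: 'a mpoly) \<notin> I2" unfolding I2_def by (rule binom_notin)
    ultimately show False using h by simp
  qed
  show ?thesis unfolding radical_splittable_def
  proof (intro exI conjI)
    show "pointed_config (n + r) (tw la1)" "pointed_config (n + r) (tw la2)" by (rule tw_pointed)+
    show "toric_ideal TYPE('a) (n + r) AA = rad TYPE('a) (n + r) (ideal_sum (toric_ideal TYPE('a) (n + r) (tw la1)) (toric_ideal TYPE('a) (n + r) (tw la2)))"
      using eq unfolding I1_def I2_def .
    show "toric_ideal TYPE('a) (n + r) (tw la1) \<noteq> toric_ideal TYPE('a) (n + r) AA" using ne1 unfolding I1_def .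
    show "toric_ideal TYPE('a) (n + r) (tw la2) \<noteq> toric_ideal TYPE('a) (n + r) AA" using ne2 unfolding I2_def .
  qed
qed

end

theorem proposition2p8:
  fixes n r :: nat and d :: "nat \<Rightarrow> nat" and a :: "nat \<Rightarrow> nat \<Rightarrow> nat"
  assumes "n \<ge> 1" and "r \<ge> 3"
    and "\<forall>j<n. d j > 0"
    and "\<forall>i<r. \<forall>j<n. a i j > 0"
  shows "radical_splittable TYPE('a::field) (n + r) (simplicial_config n r d a)"
proof -
  interpret SC n r d a using assms by unfold_locales
  show ?thesis by (rule main)
qed

end
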